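(* Let $\sigma$ be a finite sequence of transitions. If $\sigma$ satisfies at least one of the conditions (C1), (C2), (C3) below, then $\sigma$ is not $\omega$-iterable. (C1) For some clock $y\in X(\sigma)\setminus X_0$, $\sigma$ contains atomic guards $y\preccurlyeq d$ and $y\succcurlyeq c$ with $d<c$, or with $d=c$ and $\preccurlyeq$ being $<$, or with $d=c$ and $\succcurlyeq$ being $>$. (C2) There are clocks $x\in X_0$ and $y\in X(\sigma)\setminus X_0$ such that $\sigma$ contains atomic guards $y\preccurlyeq d$ and $x\succcurlyeq c$ with $c>0$. (C3) For some clock $x\in X_0$ the atomic guard $x>0$ occurs in $\sigma$, and for some clock $y\in X(\sigma)\setminus X_0$ both $y\le c$ and $y\ge c$ occur in $\sigma$ (for the same $c$).
   Context: Fix a finite set of clocks $X=\{x_0,x_1,\dots,x_m\}$, where $x_0$ is a special reference clock. A valuation is a map $v:X\to\mathbb{R}_{\ge 0}$ with $v(x_0)=0$. For $\delta\ge 0$, $v+\delta$ is the valuation adding $\delta$ to every clock other than $x_0$; for $R\subseteq X\setminus\{x_0\}$, $[R]v$ sets the clocks of $R$ to $0$ and leaves the others unchanged. A guard is a conjunction of atomic constraints $x\sim c$ with $x\in X\setminus\{x_0\}$, $\sim\in\{<,\le,=,\ge,>\}$, $c\in\mathbb{N}$. A transition $t$ is a pair $(g,R)$ of a guard $g$ and a reset set $R\subseteq X\setminus\{x_0\}$ (control states are omitted). We write $v\xrightarrow{t}^{\delta}v'$ if $v+\delta\models g$ and $v'=[R](v+\delta)$. An execution of a sequence $\sigma=t_1\cdots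 t_k$ is a sequence of valuations $v_0,\dots,v_k$ such that there are $\delta_1,\dots,\delta_k\ge 0$ with $v_{i-1}\xrightarrow{t_i}^{\delta_i}v_i$ for all $i$; we then write $v_0\xrightarrow{\sigma}^{\delta}v_k$ with $\delta=\sum_i\delta_i$, and say $\sigma$ is executable from $v_0$. The sequence $\sigma$ is $\omega$-iterable (from $v_0$) if there are infinite sequences of valuations $v_0,v_1,\dots$ and delays $\delta_1,\delta_2,\dots$ with $v_0\xrightarrow{\sigma}^{\delta_1}v_1\xrightarrow{\sigma}^{\delta_2}v_2\cdots$. For a sequence $\sigma$, $X(\sigma)$ is the set of clocks appearing in $\sigma$ (in guards or resets), and $X_0\subseteq X(\sigma)$ is the set of clocks reset on some transition of $\sigma$. The symbol $\preccurlyeq$ stands for $<$ or $\le$, and $\succcurlyeq$ stands for $>$ or $\ge$; an atomic guard $x=c$ counts both as $x\le c$ and as $x\ge c$. *)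

theory Defs
  imports Main "HOL.Real"
begin

text \<open>Clocks are natural numbers; clock 0 is the reference clock x0.
  The clock set X is {0..m}.\<close>

type_synonym clock = nat
type_synonym valuation = "clock \<Rightarrow> real"

datatype rel = Lt | Le | Eq | Ge | Gt

type_synonym atom = "clock \<times> rel \<times> nat"
text \<open>A guard is a conjunction (list) of atomic guards; a transition is (guard, reset set).\<close>
type_synonym guard = "atom list"
type_synonym transition = "guard \<times> clock set"

definition x0 :: clock where "x0 = 0"

definition is_valuation :: "nat \<Rightarrow> valuation \<Rightarrow> bool" where
  "is_valuation m v \<longleftrightarrow> v x0 = 0 \<and> (\<forall>x\<in>{0..m}. v x \<ge> 0)"

definition delay :: "valuation \<Rightarrow> real \<Rightarrow> valuation" where
  "delay v \<delta> = (\<lambda>x. if x = x0 then v x else v x + \<delta>)"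

definition reset :: "clock set \<Rightarrow> valuation \<Rightarrow> valuation" where
  "reset R v = (\<lambda>x. if x \<in> R then 0 else v x)"

fun sat_rel :: "real \<Rightarrow> rel \<Rightarrow> real \<Rightarrow> bool" where
  "sat_rel a Lt b = (a < b)"
| "sat_rel a Le b = (a \<le> b)"
| "sat_rel a Eq b = (a = b)"
| "sat_rel a Ge b = (a \<ge> b)"
| "sat_rel a Gt b = (a > b)"

definition sat_atom :: "valuation \<Rightarrow> atom \<Rightarrow> bool" where
  "sat_atom v a = (case a of (x, r, c) \<Rightarrow> sat_rel (v x) r (real c))"

definition sat_guard :: "valuation \<Rightarrow> guard \<Rightarrow> bool" where
  "sat_guard v g = (\<forall>a\<in>set g. sat_atom v a)"

definition wf_transition :: "nat \<Rightarrow> transition \<Rightarrow> bool" where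
  "wf_transition m t \<longleftrightarrow>
     (\<forall>(x, r, c)\<in>set (fst t). x \<in> {0..m} - {x0}) \<and> snd t \<subseteq> {0..m} - {x0}"

definition step :: "transition \<Rightarrow> real \<Rightarrow> valuation \<Rightarrow> valuation \<Rightarrow> bool" where
  "step t \<delta> v v' \<longleftrightarrow> \<delta> \<ge> 0 \<and> sat_guard (delay v \<delta>) (fst t) \<and> v' = reset (snd t) (delay v \<delta>)"

inductive exec :: "transition list \<Rightarrow> valuation \<Rightarrow> valuation \<Rightarrow> bool" where
  exec_Nil: "exec [] v v"
| exec_Cons: "step t \<delta> v v'' \<Longrightarrow> exec ts v'' v' \<Longrightarrow> exec (t # ts) v v'"

definition omega_iterable :: "transition list \<Rightarrow> valuation \<Rightarrow> bool" where
  "omega_iterable \<sigma> v0 \<longleftrightarrow>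
     (\<exists>vs :: nat \<Rightarrow> valuation. vs 0 = v0 \<and> (\<forall>n. exec \<sigma> (vs n) (vs (Suc n))))"

definition atoms :: "transition list \<Rightarrow> atom set" where
  "atoms \<sigma> = (\<Union>t\<in>set \<sigma>. set (fst t))"

definition reset_clocks :: "transition list \<Rightarrow> clock set" where
  "reset_clocks \<sigma> = (\<Union>t\<in>set \<sigma>. snd t)"   \<comment> \<open>X_0\<close>

definition clocks_of :: "transition list \<Rightarrow> clock set" where
  "clocks_of \<sigma> = (fst ` atoms \<sigma>) \<union> reset_clocks \<sigma>"   \<comment> \<open>X(sigma)\<close>

definition upper :: "rel \<Rightarrow> bool" where "upper r \<longleftrightarrow> r \<in> {Lt, Le, Eq}"
definition lower :: "rel \<Rightarrow> bool" where "lower r \<longleftrightarrow> r \<in> {Gt, Ge, Eq}"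

definition C1 :: "transition list \<Rightarrow> bool" where
  "C1 \<sigma> \<longleftrightarrow> (\<exists>y \<in> clocks_of \<sigma> - reset_clocks \<sigma>. \<exists>r1 d r2 c.
      (y, r1, d) \<in> atoms \<sigma> \<and> upper r1 \<and> (y, r2, c) \<in> atoms \<sigma> \<and> lower r2 \<and>
      (d < c \<or> (d = c \<and> r1 = Lt) \<or> (d = c \<and> r2 = Gt)))"

definition C2 :: "transition list \<Rightarrow> bool" where
  "C2 \<sigma> \<longleftrightarrow> (\<exists>x \<in> reset_clocks \<sigma>. \<exists>y \<in> clocks_of \<sigma> - reset_clocks \<sigma>. \<exists>r1 d r2 c.
      (y, r1, d) \<in> atoms \<sigma> \<and> upper r1 \<and> (x, r2, c) \<in> atoms \<sigma> \<and> lower r2 \<and> c > 0)"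

definition C3 :: "transition list \<Rightarrow> bool" where
  "C3 \<sigma> \<longleftrightarrow> (\<exists>x \<in> reset_clocks \<sigma>. (x, Gt, 0) \<in> atoms \<sigma>) \<and>
     (\<exists>y \<in> clocks_of \<sigma> - reset_clocks \<sigma>. \<exists>c r1 r2.
      (y, r1, c) \<in> atoms \<sigma> \<and> r1 \<in> {Le, Eq} \<and> (y, r2, c) \<in> atoms \<sigma> \<and> r2 \<in> {Ge, Eq})"

end

theory Submission
  imports Defs
begin

lemma exec_time:
  "exec \<rho> v v' \<Longrightarrow> \<exists>T\<ge>0. \<forall>z. z \<noteq> x0 \<longrightarrow>
     (z \<notin> reset_clocks \<rho> \<longrightarrow> v' z = v z + T) \<and> (z \<in> reset_clocks \<rho> \<longrightarrow> 0 \<le> v' z \<and> v' z \<le> T)"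
proof (induction rule: exec.induct)
  case (exec_Nil v)
  show ?case by (rule exI[of _ 0]) (simp add: reset_clocks_def)
next
  case (exec_Cons t \<delta> v v'' ts v')
  then obtain T where T: "T \<ge> 0" "\<forall>z. z \<noteq> x0 \<longrightarrow>
     (z \<notin> reset_clocks ts \<longrightarrow> v' z = v'' z + T) \<and> (z \<in> reset_clocks ts \<longrightarrow> 0 \<le> v' z \<and> v' z \<le> T)"
    by blast
  have d: "\<delta> \<ge> 0" and v'': "v'' = reset (snd t) (delay v \<delta>)" using exec_Cons(1) by (auto simp: step_def)
  have A: "v' z = v z + (\<delta> + T)" if "z \<noteq> x0" "z \<notin> reset_clocks (t # ts)" for z
    using that T v'' by (auto simp: reset_clocks_def reset_def delay_def)
  have B: "0 \<le> v' z \<and> v' z \<le> \<delta> + T" if z: "z \<noteq> x0" "z \<in> reset_clocks (t # ts)" for z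
  proof (cases "z \<in> reset_clocks ts")
    case True thus ?thesis using T z d by auto
  next
    case False
    with z have "z \<in> snd t" by (auto simp: reset_clocks_def)
    hence "v'' z = 0" using v'' by (simp add: reset_def)
    thus ?thesis using T z d False by auto
  qed
  show ?case using A B d T by (intro exI[of _ "\<delta> + T"]) auto
qed

lemma exec_append: "exec (a @ b) v v' \<Longrightarrow> \<exists>u. exec a v u \<and> exec b u v'"
proof (induction a arbitrary: v)
  case Nil thus ?case by (auto intro: exec.intros)
next
  case (Cons t a)
  from Cons.prems obtain \<delta> v'' where "step t \<delta> v v''" "exec (a @ b) v'' v'"
    by (auto elim: exec.cases)
  with Cons.IH show ?case by (meson exec.intros)
qed

lemma exec_atom:
  assumes "exec \<rho> v v'" "at \<in> atoms \<rho>"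
  shows "\<exists>w T1 T2. sat_atom w at \<and> T1 \<ge> 0 \<and> T2 \<ge> 0 \<and> (\<forall>z. z \<noteq> x0 \<longrightarrow>
     (z \<notin> reset_clocks \<rho> \<longrightarrow> w z = v z + T1 \<and> v' z = w z + T2) \<and> w z \<le> max (v z) 0 + T1)"
proof -
  obtain t where t: "t \<in> set \<rho>" "at \<in> set (fst t)" using assms(2) by (auto simp: atoms_def)
  then obtain a b where ab: "\<rho> = a @ t # b" by (meson split_list)
  obtain u where u: "exec a v u" "exec (t # b) u v'" using exec_append assms(1) ab by blast
  from u(2) obtain \<delta> u'' where st: "step t \<delta> u u''" and eb: "exec b u'' v'" by (auto elim: exec.cases)
  obtain T where T: "T \<ge> 0" "\<forall>z. z \<noteq> x0 \<longrightarrow>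
     (z \<notin> reset_clocks a \<longrightarrow> u z = v z + T) \<and> (z \<in> reset_clocks a \<longrightarrow> 0 \<le> u z \<and> u z \<le> T)"
    using exec_time[OF u(1)] by blast
  obtain T' where T': "T' \<ge> 0" "\<forall>z. z \<noteq> x0 \<longrightarrow>
     (z \<notin> reset_clocks b \<longrightarrow> v' z = u'' z + T') \<and> (z \<in> reset_clocks b \<longrightarrow> 0 \<le> v' z \<and> v' z \<le> T')"
    using exec_time[OF eb] by blast
  have d: "\<delta> \<ge> 0" and g: "sat_guard (delay u \<delta>) (fst t)" and u'': "u'' = reset (snd t) (delay u \<delta>)"
    using st by (auto simp: step_def)
  have R: "reset_clocks \<rho> = reset_clocks a \<union> snd t \<union> reset_clocks b"
    using ab by (auto simp: reset_clocks_def)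
  have S: "sat_atom (delay u \<delta>) at" using g t by (auto simp: sat_guard_def)
  have A: "delay u \<delta> z = v z + (T + \<delta>) \<and> v' z = delay u \<delta> z + T'"
    if z: "z \<noteq> x0" "z \<notin> reset_clocks \<rho>" for z
  proof -
    have "z \<notin> reset_clocks a" "z \<notin> snd t" "z \<notin> reset_clocks b" using z R by auto
    thus ?thesis using z T T' u'' by (auto simp: reset_def delay_def)
  qed
  have B: "delay u \<delta> z \<le> max (v z) 0 + (T + \<delta>)" if z: "z \<noteq> x0" for z
  proof (cases "z \<in> reset_clocks a")
    case True thus ?thesis using z T by (auto simp: delay_def)
  next
    case False thus ?thesis using z T by (auto simp: delay_def)
  qed
  show ?thesis using S A B T d T'
    by (intro exI[of _ "delay u \<delta>"] exI[of _ "T + \<delta>"] exI[of _ T']) auto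
qed

theorem lemma2:
  fixes m :: nat and \<sigma> :: "transition list" and v0 :: valuation
  assumes "\<forall>t\<in>set \<sigma>. wf_transition m t"
    and "is_valuation m v0"
    and "C1 \<sigma> \<or> C2 \<sigma> \<or> C3 \<sigma>"
  shows "\<not> omega_iterable \<sigma> v0"
proof
  assume "omega_iterable \<sigma> v0"
  then obtain vs where ex: "\<And>n. exec \<sigma> (vs n) (vs (Suc n))" by (auto simp: omega_iterable_def)
  have atx: "x \<noteq> x0" if "(x, r, c) \<in> atoms \<sigma>" for x r c
    using that assms(1) by (fastforce simp: atoms_def wf_transition_def)
  have rx: "x \<noteq> x0" if "x \<in> reset_clocks \<sigma>" for x
    using that assms(1) by (fastforce simp: reset_clocks_def wf_transition_def)
  have nr: "y \<in> fst ` atoms \<sigma>" if "y \<in> clocks_of \<sigma> - reset_clocks \<sigma>" for y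
    using that by (auto simp: clocks_of_def)
  have mono: "vs n y \<le> vs (Suc n) y" if "y \<noteq> x0" "y \<notin> reset_clocks \<sigma>" for n y
    using exec_time[OF ex[of n]] that by force
  have monoc: "vs n y \<le> vs (n + k) y" if "y \<noteq> x0" "y \<notin> reset_clocks \<sigma>" for n k y
    by (induction k) (use mono[OF that] order_trans in auto)
  have rbound: "0 \<le> vs (Suc n) x \<and> vs (Suc n) x \<le> vs (Suc n) y - vs n y"
    if h: "y \<noteq> x0" "y \<notin> reset_clocks \<sigma>" "x \<in> reset_clocks \<sigma>" for n x y
  proof -
    obtain T where T: "T \<ge> 0" "\<forall>z. z \<noteq> x0 \<longrightarrow>
     (z \<notin> reset_clocks \<sigma> \<longrightarrow> vs (Suc n) z = vs n z + T) \<and> (z \<in> reset_clocks \<sigma> \<longrightarrow> 0 \<le> vs (Suc n) z \<and> vs (Suc n) z \<le> T)"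
      using exec_time[OF ex[of n]] by blast
    thus ?thesis using h rx[OF h(3)] by auto
  qed
  have timing: "\<exists>w. sat_atom w (x, r, c) \<and> w x \<le> vs (Suc (Suc n)) y - vs n y"
    if h: "y \<noteq> x0" "y \<notin> reset_clocks \<sigma>" "x \<in> reset_clocks \<sigma>" "(x, r, c) \<in> atoms \<sigma>" for n x y r c
  proof -
    obtain w T1 T2 where W: "sat_atom w (x, r, c)" "T1 \<ge> 0" "T2 \<ge> 0" "\<forall>z. z \<noteq> x0 \<longrightarrow>
     (z \<notin> reset_clocks \<sigma> \<longrightarrow> w z = vs (Suc n) z + T1 \<and> vs (Suc (Suc n)) z = w z + T2) \<and> w z \<le> max (vs (Suc n) z) 0 + T1"
      using exec_atom[OF ex[of "Suc n"] h(4)] by blast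
    have "w x \<le> vs (Suc n) x + T1" using W(4) rx[OF h(3)] rbound[OF h(1-3), of n] by force
    also have "\<dots> \<le> vs (Suc (Suc n)) y - vs n y"
      using W(3,4) h(1,2) rbound[OF h(1-3), of n] by force
    finally show ?thesis using W(1) by blast
  qed
  have chk: "\<exists>w. sat_atom w (y, r, c) \<and> vs n y \<le> w y \<and> w y \<le> vs (Suc n) y"
    if h: "y \<noteq> x0" "y \<notin> reset_clocks \<sigma>" "(y, r, c) \<in> atoms \<sigma>" for n y r c
  proof -
    obtain w T1 T2 where W: "sat_atom w (y, r, c)" "T1 \<ge> 0" "T2 \<ge> 0" "\<forall>z. z \<noteq> x0 \<longrightarrow>
     (z \<notin> reset_clocks \<sigma> \<longrightarrow> w z = vs n z + T1 \<and> vs (Suc n) z = w z + T2) \<and> w z \<le> max (vs n z) 0 + T1"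
      using exec_atom[OF ex[of n] h(3)] by blast
    thus ?thesis using h by force
  qed
  from assms(3) show False
  proof (elim disjE)
    assume "C1 \<sigma>"
    then obtain y r1 d r2 c where y: "y \<in> clocks_of \<sigma> - reset_clocks \<sigma>"
      and a: "(y, r1, d) \<in> atoms \<sigma>" "upper r1" "(y, r2, c) \<in> atoms \<sigma>" "lower r2"
      and dc: "d < c \<or> (d = c \<and> r1 = Lt) \<or> (d = c \<and> r2 = Gt)"
      unfolding C1_def by blast
    have y0: "y \<noteq> x0" using a atx by blast
    have yr: "y \<notin> reset_clocks \<sigma>" using y by blast
    obtain wl where wl: "sat_atom wl (y, r2, c)" "wl y \<le> vs 1 y"
      using chk[OF y0 yr a(3), of 0] by auto
    obtain wu where wu: "sat_atom wu (y, r1, d)" "vs 1 y \<le> wu y"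
      using chk[OF y0 yr a(1), of 1] by auto
    have "wl y \<le> wu y" using wl wu by linarith
    then show False using wl(1) wu(1) a(2,4) dc
      by (cases r1; cases r2) (auto simp: sat_atom_def upper_def lower_def)
  next
    assume "C2 \<sigma>"
    then obtain x y r1 d r2 c where x: "x \<in> reset_clocks \<sigma>" and y: "y \<in> clocks_of \<sigma> - reset_clocks \<sigma>"
      and a: "(y, r1, d) \<in> atoms \<sigma>" "upper r1" "(x, r2, c) \<in> atoms \<sigma>" "lower r2" and c: "c > 0"
      unfolding C2_def by blast
    have y0: "y \<noteq> x0" using a atx by blast
    have yr: "y \<notin> reset_clocks \<sigma>" using y by blast
    have step2: "vs n y + c \<le> vs (Suc (Suc n)) y" for n
    proof -
      obtain w where "sat_atom w (x, r2, c)" "w x \<le> vs (Suc (Suc n)) y - vs n y"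
        using timing[OF y0 yr x a(3)] by blast
      moreover have "real c \<le> w x" using calculation(1) a(4)
        by (cases r2) (auto simp: sat_atom_def lower_def)
      ultimately show ?thesis by linarith
    qed
    have grow: "vs 0 y + real j * c \<le> vs (2 * j) y" for j
    proof (induction j)
      case 0 thus ?case by simp
    next
      case (Suc j)
      have "vs 0 y + real (Suc j) * c = (vs 0 y + real j * c) + c" by (simp add: algebra_simps)
      also have "\<dots> \<le> vs (2 * j) y + c" using Suc by simp
      also have "\<dots> \<le> vs (Suc (Suc (2 * j))) y" by (rule step2)
      finally show ?case by simp
    qed
    have ub: "vs n y \<le> d" for n
    proof -
      obtain w where "sat_atom w (y, r1, d)" "vs n y \<le> w y"
        using chk[OF y0 yr a(1), of n] by auto
      moreover have "w y \<le> d" using calculation(1) a(2)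
        by (cases r1) (auto simp: sat_atom_def upper_def)
      ultimately show ?thesis by linarith
    qed
    obtain j where "d - vs 0 y < real j * real c" using reals_Archimedean3[of "real c"] c by auto
    with grow[of j] ub[of "2 * j"] show False by linarith
  next
    assume "C3 \<sigma>"
    then obtain x y c r1 r2 where x: "x \<in> reset_clocks \<sigma>" "(x, Gt, 0) \<in> atoms \<sigma>"
      and y: "y \<in> clocks_of \<sigma> - reset_clocks \<sigma>"
      and a: "(y, r1, c) \<in> atoms \<sigma>" "r1 \<in> {Le, Eq}" "(y, r2, c) \<in> atoms \<sigma>" "r2 \<in> {Ge, Eq}"
      unfolding C3_def by blast
    have y0: "y \<noteq> x0" using a atx by blast
    have yr: "y \<notin> reset_clocks \<sigma>" using y by blast
    obtain w where w: "sat_atom w (x, Gt, 0)" "w x \<le> vs 3 y - vs 1 y"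
      using timing[OF y0 yr x(1) x(2), of 1] by (auto simp: numeral_3_eq_3)
    have strict: "vs 1 y < vs 3 y" using w by (simp add: sat_atom_def)
    obtain wl where wl: "sat_atom wl (y, r2, c)" "wl y \<le> vs 1 y"
      using chk[OF y0 yr a(3), of 0] by auto
    obtain wu where wu: "sat_atom wu (y, r1, c)" "vs 3 y \<le> wu y"
      using chk[OF y0 yr a(1), of 3] by auto
    have "c \<le> wl y" using wl(1) a(4) by (auto simp: sat_atom_def)
    moreover have "wu y \<le> c" using wu(1) a(2) by (auto simp: sat_atom_def)
    ultimately show False using wl(2) wu(2) strict by linarith
  qed
qed

end
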